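(* Let $\rho\in\mathcal B_+(A_0A_1)$. Then there exist $V\in\mathcal B(A_0)$ with ${\rm Tr}[VV^*]=1$ and $G\in\mathcal B_+(A_0A_1)$ such that $\rho=(\chi_V\otimes\mathrm{id}_{A_1})(G)$ and $\|G\|=\|\rho\|^\diamond_{A_1|A_0}$, where $\chi_V(X)=VXV^*$ and $\|G\|$ is the operator norm.
   Context: For finite-dimensional $\mathcal H_{A_0},\mathcal H_{A_1}$ and $\rho\in\mathcal B_+(A_0A_1)$, $\|\rho\|^\diamond_{A_1|A_0}=\min\{\lambda>0:\rho\le\lambda\,\sigma\otimes I_{A_1}\text{ for some state }\sigma\in\mathfrak S(A_0)\}$ (equal to $2^{-H_{\min}(A_1|A_0)_\rho}$). *)

theory Defs
  imports "HOL-Analysis.Analysis"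
begin

text \<open>Operators on finite-dimensional complex Hilbert spaces are represented as
square complex matrices indexed by a finite type; the composite system A0A1 is
indexed by the product type of the two index types.\<close>

type_synonym 'n cmat = "complex ^ 'n ^ 'n"

definition adj :: "'n::finite cmat \<Rightarrow> 'n cmat" where
  "adj A = (\<chi> i j. cnj (A $ j $ i))"

definition tr :: "'n::finite cmat \<Rightarrow> complex" where
  "tr A = (\<Sum>i\<in>UNIV. A $ i $ i)"

definition psd :: "'n::finite cmat \<Rightarrow> bool" where
  "psd A \<longleftrightarrow> (\<forall>v :: complex ^ 'n.
      let q = (\<Sum>i\<in>UNIV. cnj (v $ i) * (A *v v) $ i) in Im q = 0 \<and> Re q \<ge> 0)"

definition loewner_le :: "'n::finite cmat \<Rightarrow> 'n cmat \<Rightarrow> bool" where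
  "loewner_le A B \<longleftrightarrow> psd (B - A)"

definition is_state :: "'n::finite cmat \<Rightarrow> bool" where
  "is_state \<sigma> \<longleftrightarrow> psd \<sigma> \<and> tr \<sigma> = 1"

definition kron :: "'a::finite cmat \<Rightarrow> 'b::finite cmat \<Rightarrow> ('a \<times> 'b) cmat" where
  "kron A B = (\<chi> p q. A $ fst p $ fst q * B $ snd p $ snd q)"

definition conj_tensor_id :: "'a::finite cmat \<Rightarrow> ('a \<times> 'b::finite) cmat \<Rightarrow> ('a \<times> 'b) cmat" where
  "conj_tensor_id V G = kron V (mat 1) ** G ** adj (kron V (mat 1))"

definition op_norm :: "'n::finite cmat \<Rightarrow> real" where
  "op_norm A = onorm (\<lambda>x. A *v x)"

text \<open>\<open>\<parallel>\<rho>\<parallel>^\<diamond>_{A1|A0} = min{\<lambda>>0 : \<rho> \<le> \<lambda> \<sigma>\<otimes>I, \<sigma> a state}\<close>, written as an infimum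
(it is attained whenever \<rho> \<noteq> 0; for \<rho> = 0 the infimum is 0).\<close>
definition cond_diamond_norm :: "('a::finite \<times> 'b::finite) cmat \<Rightarrow> real" where
  "cond_diamond_norm \<rho> = Inf {t::real. t > 0 \<and>
      (\<exists>\<sigma> :: 'a cmat. is_state \<sigma> \<and> loewner_le \<rho> (t *\<^sub>R kron \<sigma> (mat 1 :: 'b cmat)))}"

end

theory Submission
  imports Defs
begin

definition cinner :: "complex ^'n \<Rightarrow> complex ^'n \<Rightarrow> complex" where
  "cinner v w = (\<Sum>i\<in>UNIV. cnj (v $ i) * w $ i)"

definition qf :: "'n::finite cmat \<Rightarrow> complex ^'n \<Rightarrow> complex" where
  "qf A v = cinner v (A *v v)"

lemma psd_qf: "psd A \<longleftrightarrow> (\<forall>v. Im (qf A v) = 0 \<and> Re (qf A v) \<ge> 0)"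
  by (simp add: psd_def qf_def cinner_def Let_def)

lemma Re_cinner: "Re (cinner v w) = inner v w"
  by (simp add: cinner_def inner_vec_def inner_complex_def Re_sum)

lemma cinner_self: "cinner v v = complex_of_real ((norm v)^2)"
proof -
  have "cinner v v = (\<Sum>i\<in>UNIV. complex_of_real ((cmod (v$i))^2))"
    unfolding cinner_def by (rule sum.cong) (auto, metis complex_norm_square mult.commute of_real_power)
  also have "\<dots> = complex_of_real (\<Sum>i\<in>UNIV. (cmod (v$i))^2)" by simp
  also have "(\<Sum>i\<in>UNIV. (cmod (v$i))^2) = (norm v)^2"
    unfolding norm_vec_def L2_set_def by (simp add: sum_nonneg)
  finally show ?thesis .
qed

lemma cinner_adj: "cinner v (A *v w) = cinner (adj A *v v) w"
  unfolding cinner_def adj_def matrix_vector_mult_def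
  apply (simp add: sum_distrib_left sum_distrib_right)
  apply (subst sum.swap) apply (simp add: mult_ac)
  done

lemma adj_adj[simp]: "adj (adj A) = A"
  by (simp add: adj_def vec_eq_iff)

lemma adj_mult: "adj (A ** B) = adj B ** adj A"
  by (simp add: adj_def vec_eq_iff matrix_matrix_mult_def mult.commute)

lemma adj_mat1[simp]: "adj (mat 1) = mat 1"
  by (simp add: adj_def vec_eq_iff mat_def)

lemma adj_add: "adj (A + B) = adj A + adj B"
  by (simp add: adj_def vec_eq_iff)

lemma adj_diff: "adj (A - B) = adj A - adj B"
  by (simp add: adj_def vec_eq_iff)

lemma adj_scaleR: "adj (c *\<^sub>R A) = c *\<^sub>R adj A"
  by (simp add: adj_def vec_eq_iff)

lemma mvm_scaleR: "(A::'n::finite cmat) *v (c *\<^sub>R x) = c *\<^sub>R (A *v x)"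
  apply (simp add: matrix_vector_mult_def vec_eq_iff)
  apply (simp add: scaleR_conv_of_real sum_distrib_left mult.left_commute)
  done

lemma scaleR_mvm: "((c *\<^sub>R A)::'n::finite cmat) *v x = c *\<^sub>R (A *v x)"
  apply (simp add: matrix_vector_mult_def vec_eq_iff)
  apply (simp add: scaleR_conv_of_real sum_distrib_left mult.assoc)
  done

lemma cinner_add_right: "cinner v (w + u) = cinner v w + cinner v u"
  by (simp add: cinner_def distrib_left sum.distrib)
lemma cinner_diff_right: "cinner v (w - u) = cinner v w - cinner v u"
  by (simp add: cinner_def right_diff_distrib sum_subtractf)
lemma cinner_scaleR_right: "cinner v (c *\<^sub>R w) = of_real c * cinner v w"
  apply (simp add: cinner_def)
  apply (simp add: scaleR_conv_of_real sum_distrib_left mult.left_commute)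
  done

lemma qf_diff: "qf (A - B) v = qf A v - qf B v"
  by (simp add: qf_def matrix_vector_mult_diff_rdistrib cinner_diff_right)
lemma qf_add: "qf (A + B) v = qf A v + qf B v"
  by (simp add: qf_def matrix_vector_mult_add_rdistrib cinner_add_right)
lemma qf_scaleR: "qf (c *\<^sub>R A) v = of_real c * qf A v"
  by (simp add: qf_def scaleR_mvm cinner_scaleR_right)
lemma qf_id: "qf (mat 1) v = of_real ((norm v)^2)"
  by (simp add: qf_def cinner_self)

lemma qf_congr: "qf (M ** X ** adj M) v = qf X (adj M *v v)"
  by (simp add: qf_def cinner_adj matrix_vector_mul_assoc[symmetric])

lemma psd_congr: "psd X \<Longrightarrow> psd (M ** X ** adj M)"
  by (simp add: psd_qf qf_congr)

lemma qf_two: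
  assumes "i \<noteq> j"
  shows "qf A (\<chi> l. if l = i then 1 else if l = j then c else 0) =
     A$i$i + A$i$j * c + cnj c * A$j$i + cnj c * A$j$j * c"
proof -
  have ev: "(\<chi> l. if l = i then 1 else if l = j then c else 0) = (\<chi> l. (if l = i then 1 else 0) + (if l = j then c else 0))"
    using assms by (simp add: vec_eq_iff)
  have mv: "(A *v (\<chi> l. if l = i then 1 else if l = j then c else 0)) $ l = A$l$i + A$l$j * c" for l
    unfolding ev matrix_vector_mult_def
    by (simp add: distrib_left sum.distrib if_distrib[of "\<lambda>x. _ * x"] cong: if_cong)
  show ?thesis unfolding qf_def cinner_def mv unfolding ev using assms
    by (simp add: if_distrib[of cnj] distrib_right sum.distrib if_distrib[of "\<lambda>x. x * _"] cong: if_cong) (simp add: algebra_simps)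
qed

lemma qf_one:
  shows "qf A (\<chi> l. if l = i then 1 else 0) = A$i$i"
proof -
  have mv: "(A *v (\<chi> l. if l = i then 1 else 0)) $ l = A$l$i" for l
    unfolding matrix_vector_mult_def
    by (simp add: if_distrib[of "\<lambda>x. _ * x"] cong: if_cong)
  show ?thesis unfolding qf_def cinner_def mv
    by (simp add: if_distrib[of cnj] if_distrib[of "\<lambda>x. x * _"] cong: if_cong)
qed

lemma psd_hermitian:
  assumes "psd A" shows "adj A = A"
proof -
  have "A $ j $ i = cnj (A $ i $ j)" for i j
  proof (cases "i = j")
    case True
    have "Im (qf A (\<chi> l. if l = i then 1 else 0)) = 0" using assms[unfolded psd_qf] by blast
    then have "Im (A$i$i) = 0" by (simp add: qf_one)
    then show ?thesis using True by (simp add: complex_eq_iff)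
  next
    case False
    have "Im (qf A (\<chi> l. if l = i then 1 else 0)) = 0" "Im (qf A (\<chi> l. if l = j then 1 else 0)) = 0"
      using assms[unfolded psd_qf] by blast+
    then have d1: "Im (A$i$i) = 0" "Im (A$j$j) = 0" by (simp_all add: qf_one)
    have "Im (qf A (\<chi> l. if l = i then 1 else if l = j then 1 else 0)) = 0"
      "Im (qf A (\<chi> l. if l = i then 1 else if l = j then \<i> else 0)) = 0"
      using assms[unfolded psd_qf] by blast+
    then have "Im (A$i$j + A$j$i) = 0" "Re (A$i$j) - Re (A$j$i) = 0"
      unfolding qf_two[OF False] using d1 by simp_all
    then show ?thesis by (simp add: complex_eq_iff)
  qed
  then have "\<And>i j. cnj (A $ j $ i) = A $ i $ j" by (metis complex_cnj_cnj)
  then show ?thesis by (simp add: adj_def vec_eq_iff)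
qed

lemma kron_mult: "kron A B ** kron C D = kron (A ** C) (B ** D)"
  unfolding kron_def matrix_matrix_mult_def
  apply (simp add: vec_eq_iff UNIV_Times_UNIV[symmetric] sum.cartesian_product[symmetric] sum_product mult_ac del: UNIV_Times_UNIV)
  apply (simp add: sum.cartesian_product split_def)
  done

lemma adj_kron: "adj (kron A B) = kron (adj A) (adj B)"
  by (simp add: adj_def kron_def vec_eq_iff)

lemma kron_one: "kron (mat 1) (mat 1) = mat 1"
  by (simp add: kron_def mat_def vec_eq_iff prod_eq_iff)

lemma kron_add: "kron (A + B) C = kron A C + kron B C"
  by (simp add: kron_def vec_eq_iff distrib_right)

lemma kron_diff: "kron (A - B) C = kron A C - kron B C"
  by (simp add: kron_def vec_eq_iff left_diff_distrib)

lemma kron_scaleR: "kron (c *\<^sub>R A) B = c *\<^sub>R kron A B"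
  by (simp add: kron_def vec_eq_iff)

lemma chol:
  fixes A :: "'n \<Rightarrow> 'n \<Rightarrow> complex"
  assumes "finite S"
    and "\<forall>i\<in>S. \<forall>j\<in>S. A j i = cnj (A i j)"
    and "\<forall>v. (\<exists>i\<in>S. v i \<noteq> 0) \<longrightarrow> Re (\<Sum>i\<in>S. \<Sum>j\<in>S. cnj (v i) * A i j * v j) > 0"
  shows "\<exists>L. \<forall>i\<in>S. \<forall>j\<in>S. A i j = (\<Sum>m\<in>S. L i m * cnj (L j m))"
  using assms
proof (induction S arbitrary: A rule: finite_induct)
  case empty
  then show ?case by simp
next
  case (insert k S)
  let ?T = "insert k S"
  have herm: "\<And>i j. i \<in> ?T \<Longrightarrow> j \<in> ?T \<Longrightarrow> A j i = cnj (A i j)" using insert.prems(1) by blast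
  define a where "a = A k k"
  have a_cnj: "cnj a = a" using herm[of k k] unfolding a_def by simp
  have nk: "\<And>x. x \<in> S \<Longrightarrow> x \<noteq> k" using insert.hyps by auto
  have "Re (\<Sum>i\<in>?T. \<Sum>j\<in>?T. cnj (if i = k then 1 else 0) * A i j * (if j = k then 1 else 0)) > 0"
    using insert.prems(2)[rule_format, of "\<lambda>l. if l = k then 1 else 0"] by auto
  moreover have "(\<Sum>i\<in>?T. \<Sum>j\<in>?T. cnj (if i = k then 1 else 0) * A i j * (if j = k then 1 else 0)) = A k k"
    using insert.hyps nk by (simp cong: sum.cong_simp)
  ultimately have a_pos: "Re a > 0" by (simp add: a_def)
  define r where "r = complex_of_real (sqrt (Re a))"
  have r_nz: "r \<noteq> 0" using a_pos unfolding r_def by simp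
  have cnj_r: "cnj r = r" unfolding r_def by simp
  have a_r: "a = r * r"
  proof -
    have "Im a = 0" using a_cnj by (metis Reals_cnj_iff complex_is_Real_iff)
    then show ?thesis using a_pos unfolding r_def
      by (simp add: complex_eq_iff)
  qed
  have a_nz: "a \<noteq> 0" using a_pos by auto
  define A' where "A' i j = A i j - A i k * A k j / a" for i j
  have herm': "\<forall>i\<in>S. \<forall>j\<in>S. A' j i = cnj (A' i j)"
  proof (intro ballI)
    fix i j assume i: "i \<in> S" and j: "j \<in> S"
    have e1: "cnj (A i j) = A j i" "cnj (A i k) = A k i" "cnj (A k j) = A j k"
      using herm[of i j] herm[of i k] herm[of k j] i j by auto
    show "A' j i = cnj (A' i j)" unfolding A'_def by (simp add: e1 a_cnj mult.commute)
  qed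
  have pd': "\<forall>v. (\<exists>i\<in>S. v i \<noteq> 0) \<longrightarrow> Re (\<Sum>i\<in>S. \<Sum>j\<in>S. cnj (v i) * A' i j * v j) > 0"
  proof (intro allI impI)
    fix v :: "'n \<Rightarrow> complex"
    assume v: "\<exists>i\<in>S. v i \<noteq> 0"
    define c where "c = (\<Sum>j\<in>S. A k j * v j)"
    define d where "d = (\<Sum>i\<in>S. cnj (v i) * A i k)"
    define Q where "Q = (\<Sum>i\<in>S. \<Sum>j\<in>S. cnj (v i) * A i j * v j)"
    define wk where "wk = - c / a"
    define w where "w = v(k := wk)"
    have wS: "\<And>i. i \<in> S \<Longrightarrow> w i = v i" using insert.hyps unfolding w_def by auto
    have hk: "\<And>j. j \<in> S \<Longrightarrow> cnj (A k j) = A j k" using herm by (metis insertCI)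
    have d_c: "d = cnj c"
      unfolding c_def d_def cnj_sum by (rule sum.cong) (auto simp: hk mult.commute)
    have "(\<Sum>i\<in>?T. \<Sum>j\<in>?T. cnj (w i) * A i j * w j)
       = (\<Sum>j\<in>?T. cnj wk * A k j * w j) + (\<Sum>i\<in>S. \<Sum>j\<in>?T. cnj (v i) * A i j * w j)"
      using insert.hyps wS by (simp add: w_def)
    also have "(\<Sum>j\<in>?T. cnj wk * A k j * w j) = cnj wk * a * wk + cnj wk * c"
      using insert.hyps wS by (simp add: w_def a_def c_def sum_distrib_left mult.assoc)
    also have "(\<Sum>i\<in>S. \<Sum>j\<in>?T. cnj (v i) * A i j * w j) = d * wk + Q"
      using insert.hyps wS by (simp add: w_def d_def Q_def sum.distrib sum_distrib_right)
    finally have L: "(\<Sum>i\<in>?T. \<Sum>j\<in>?T. cnj (w i) * A i j * w j) = cnj wk * a * wk + cnj wk * c + (d * wk + Q)" .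
    have R: "(\<Sum>i\<in>S. \<Sum>j\<in>S. cnj (v i) * A' i j * v j) = Q - d * c / a"
      unfolding A'_def Q_def d_def c_def
      by (simp add: right_diff_distrib left_diff_distrib sum_subtractf sum_distrib_left sum_distrib_right sum_divide_distrib mult_ac)
    have eq: "(\<Sum>i\<in>?T. \<Sum>j\<in>?T. cnj (w i) * A i j * w j) = (\<Sum>i\<in>S. \<Sum>j\<in>S. cnj (v i) * A' i j * v j)"
      unfolding L R wk_def d_c using a_nz a_cnj by (simp add: field_simps)
    have "\<exists>i\<in>?T. w i \<noteq> 0" using v wS by auto
    then have "Re (\<Sum>i\<in>?T. \<Sum>j\<in>?T. cnj (w i) * A i j * w j) > 0"
      by (rule insert.prems(2)[rule_format])
    then show "Re (\<Sum>i\<in>S. \<Sum>j\<in>S. cnj (v i) * A' i j * v j) > 0"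
      unfolding eq .
  qed
  obtain L' where L': "\<forall>i\<in>S. \<forall>j\<in>S. A' i j = (\<Sum>m\<in>S. L' i m * cnj (L' j m))"
    using insert.IH[OF herm' pd'] by blast
  define L where "L i m = (if m = k then A i k / r else if i = k then 0 else L' i m)" for i m
  have sumT: "(\<Sum>m\<in>?T. L i m * cnj (L j m)) = A i k / r * cnj (A j k / r) + (\<Sum>m\<in>S. L i m * cnj (L j m))" for i j
    using insert.hyps by (simp add: L_def)
  have "A i j = (\<Sum>m\<in>?T. L i m * cnj (L j m))" if i: "i \<in> ?T" and j: "j \<in> ?T" for i j
  proof -
    have kS: "k \<notin> S" by fact
    consider "i = k" "j = k" | "i = k" "j \<in> S" "j \<noteq> k" | "i \<in> S" "i \<noteq> k" "j = k" | "i \<in> S" "j \<in> S" "i \<noteq> k" "j \<noteq> k"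
      using i j kS by blast
    then show ?thesis
    proof cases
      case 1
      have "(\<Sum>m\<in>S. L i m * cnj (L j m)) = 0" using 1 kS by (auto simp: L_def intro!: sum.neutral)
      then show ?thesis unfolding sumT using 1 r_nz a_cnj a_r by (simp add: a_def[symmetric] cnj_r)
    next
      case 2
      have "(\<Sum>m\<in>S. L i m * cnj (L j m)) = 0" using 2 kS by (auto simp: L_def intro!: sum.neutral)
      then show ?thesis unfolding sumT using 2 r_nz a_cnj a_r herm[of j k] j
        by (simp add: a_def[symmetric] cnj_r)
    next
      case 3
      have "(\<Sum>m\<in>S. L i m * cnj (L j m)) = 0" using 3 kS by (auto simp: L_def intro!: sum.neutral)
      then show ?thesis unfolding sumT using 3 r_nz a_cnj a_r
        by (simp add: a_def[symmetric] cnj_r)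
    next
      case 4
      have "(\<Sum>m\<in>S. L i m * cnj (L j m)) = (\<Sum>m\<in>S. L' i m * cnj (L' j m))"
        using 4 kS by (auto simp: L_def intro!: sum.cong)
      also have "\<dots> = A' i j" using L' 4 by simp
      finally show ?thesis unfolding sumT using 4 r_nz a_r herm[of j k] j
        by (simp add: A'_def cnj_r)
    qed
  qed
  then show ?case by blast
qed

lemma qf_sum: "qf P v = (\<Sum>i\<in>UNIV. \<Sum>j\<in>UNIV. cnj (v$i) * P$i$j * v$j)"
  by (simp add: qf_def cinner_def matrix_vector_mult_def sum_distrib_left mult.assoc)

lemma qf_gram: "qf (W ** adj W) v = of_real ((norm (adj W *v v))^2)"
  by (simp add: qf_def matrix_vector_mul_assoc[symmetric] cinner_adj cinner_self)

lemma factor_pd: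
  fixes P :: "'n::finite cmat"
  assumes h: "adj P = P" and pd: "\<forall>v. v \<noteq> 0 \<longrightarrow> Re (qf P v) > 0"
  shows "\<exists>W Wi. W ** adj W = P \<and> W ** Wi = mat 1 \<and> Wi ** W = mat 1"
proof -
  have h1: "\<forall>i\<in>UNIV. \<forall>j\<in>UNIV. P$j$i = cnj (P$i$j)"
  proof (intro ballI)
    fix i j
    have "adj P $ j $ i = P $ j $ i" using h by simp
    then show "P$j$i = cnj (P$i$j)" by (simp add: adj_def)
  qed
  have h2: "\<forall>v. (\<exists>i\<in>UNIV. v i \<noteq> 0) \<longrightarrow> Re (\<Sum>i\<in>UNIV. \<Sum>j\<in>UNIV. cnj (v i) * P$i$j * v j) > 0"
  proof (intro allI impI)
    fix v :: "'n \<Rightarrow> complex" assume "\<exists>i\<in>UNIV. v i \<noteq> 0"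
    then have "(\<chi> i. v i) \<noteq> 0" by (auto simp: vec_eq_iff)
    then show "Re (\<Sum>i\<in>UNIV. \<Sum>j\<in>UNIV. cnj (v i) * P$i$j * v j) > 0"
      using pd qf_sum[of P "\<chi> i. v i"] by auto
  qed
  obtain L :: "'n \<Rightarrow> 'n \<Rightarrow> complex" where L: "\<forall>i\<in>UNIV. \<forall>j\<in>UNIV. P$i$j = (\<Sum>m\<in>UNIV. L i m * cnj (L j m))"
    using chol[OF finite h1 h2] by blast
  define W :: "'n cmat" where "W = (\<chi> i m. L i m)"
  have WP: "W ** adj W = P"
    using L by (simp add: W_def adj_def matrix_matrix_mult_def vec_eq_iff)
  have "\<forall>x. adj W *v x = 0 \<longrightarrow> x = 0"
  proof (intro allI impI)
    fix x assume "adj W *v x = 0"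
    then have "qf P x = 0" using qf_gram[of W x] WP by simp
    then show "x = 0" using pd by force
  qed
  then obtain B where B: "B ** adj W = mat 1" using matrix_left_invertible_ker by blast
  then have B2: "adj W ** B = mat 1" using matrix_left_right_inverse by blast
  have "W ** adj B = mat 1" using arg_cong[OF B, of adj] by (simp add: adj_mult)
  moreover have "adj B ** W = mat 1" using arg_cong[OF B2, of adj] by (simp add: adj_mult)
  ultimately show ?thesis using WP by blast
qed

lemma bl_mvm: "bounded_linear (\<lambda>x. (A::'n::finite cmat) *v x)"
proof -
  have "linear (\<lambda>x. A *v x)"
    by (rule linearI) (simp_all add: matrix_vector_right_distrib mvm_scaleR)
  then show ?thesis using linear_conv_bounded_linear by blast
qed

lemma inner_mvm_herm: assumes "adj G = G" shows "inner x (G *v y) = inner (G *v x) y"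
  using cinner_adj[of x G y] assms by (metis Re_cinner)

lemma Re_qf: "Re (qf G v) = inner v (G *v v)"
  by (simp add: qf_def Re_cinner)

lemma psd_norm_bound:
  fixes G :: "'n::finite cmat"
  assumes psd: "psd G" and c: "c \<ge> 0" and bd: "\<And>v. Re (qf G v) \<le> c * (norm v)^2"
  shows "norm (G *v v) \<le> c * norm v"
proof -
  have h: "adj G = G" using psd_hermitian[OF psd] .
  define B where "B x y = inner x (G *v y)" for x y
  have Bsym: "B x y = B y x" for x y
    unfolding B_def using inner_mvm_herm[OF h, of x y] by (simp add: inner_commute)
  have Bpos: "B x x \<ge> 0" for x
    using psd unfolding psd_qf B_def by (simp add: Re_qf[symmetric])
  have Bub: "B x x \<le> c * (norm x)^2" for x
    using bd[of x] unfolding B_def by (simp add: Re_qf[symmetric])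
  have Badd: "B (x + y) (x + y) = B x x + 2 * B x y + B y y" for x y
    unfolding B_def using Bsym[of x y, unfolded B_def]
    by (simp add: matrix_vector_right_distrib inner_add_left inner_add_right)
  have Bdiff: "B (x - y) (x - y) = B x x - 2 * B x y + B y y" for x y
    unfolding B_def using Bsym[of x y, unfolded B_def]
    by (simp add: matrix_vector_mult_diff_distrib inner_diff_left inner_diff_right)
  have par: "(norm (x + y))^2 \<le> 2 * (norm x)^2 + 2 * (norm y)^2" for x y :: "complex^'n"
  proof -
    have "(norm (x + y))^2 + (norm (x - y))^2 = 2 * (norm x)^2 + 2 * (norm y)^2"
      by (simp add: power2_norm_eq_inner inner_add_left inner_add_right inner_diff_left inner_diff_right inner_commute)
    then show ?thesis by (smt (verit) zero_le_power2)
  qed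
  have Bxy: "2 * B x y \<le> c * ((norm x)^2 + (norm y)^2)" for x y
  proof -
    have "4 * B x y = B (x + y) (x + y) - B (x - y) (x - y)" using Badd Bdiff by simp
    also have "\<dots> \<le> c * (norm (x + y))^2" using Bub[of "x+y"] Bpos[of "x-y"] by simp
    also have "\<dots> \<le> c * (2 * (norm x)^2 + 2 * (norm y)^2)" using par c by (simp add: mult_left_mono)
    finally show ?thesis by (simp add: algebra_simps)
  qed
  define u where "u = G *v v"
  show ?thesis
  proof (cases "u = 0 \<or> v = 0")
    case True
    then show ?thesis using c unfolding u_def by auto
  next
    case False
    then have nu: "norm u > 0" and nv: "norm v > 0" by auto
    define t where "t = norm u / norm v"
    have "B u (t *\<^sub>R v) = t * (norm u)^2"
      unfolding B_def u_def by (simp add: mvm_scaleR power2_norm_eq_inner)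
    then have "2 * (t * (norm u)^2) \<le> c * ((norm u)^2 + (norm (t *\<^sub>R v))^2)"
      using Bxy[of u "t *\<^sub>R v"] by simp
    also have "(norm (t *\<^sub>R v))^2 = (norm u)^2" using nv nu unfolding t_def by (simp add: power2_eq_square)
    finally have "2 * (norm u / norm v) * (norm u)^2 \<le> 2 * c * (norm u)^2" unfolding t_def by simp
    then have "(norm u / norm v) * (2 * (norm u)^2) \<le> c * (2 * (norm u)^2)" by (simp add: mult_ac)
    then have "norm u / norm v \<le> c" by (rule mult_right_le_imp_le) (use nu in simp)
    then show ?thesis using nv unfolding u_def by (simp add: divide_le_eq mult.commute)
  qed
qed

lemma op_norm_le: "0 \<le> c \<Longrightarrow> (\<And>v. norm (G *v v) \<le> c * norm v) \<Longrightarrow> op_norm G \<le> c"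
  unfolding op_norm_def by (rule onorm_bound)

lemma op_norm_ge: "norm (G *v v) \<le> op_norm G * norm v"
  unfolding op_norm_def by (rule onorm[OF bl_mvm])

lemma op_norm_nonneg: "op_norm G \<ge> 0"
  unfolding op_norm_def by (rule onorm_pos_le[OF bl_mvm])

lemma qf_le_op_norm: "Re (qf G v) \<le> op_norm G * (norm v)^2"
proof -
  have "Re (qf G v) \<le> norm v * norm (G *v v)" unfolding Re_qf by (rule norm_cauchy_schwarz)
  also have "\<dots> \<le> norm v * (op_norm G * norm v)" by (rule mult_left_mono[OF op_norm_ge]) simp
  finally show ?thesis by (simp add: power2_eq_square mult_ac)
qed

lemma tr_gram: "tr (W ** adj W) = of_real ((norm W)^2)"
proof -
  have "tr (W ** adj W) = (\<Sum>i\<in>UNIV. cinner (W$i) (W$i))"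
    unfolding tr_def cinner_def matrix_matrix_mult_def adj_def by (simp add: mult.commute)
  also have "\<dots> = (\<Sum>i\<in>UNIV. of_real ((norm (W$i))^2))" by (simp add: cinner_self)
  also have "\<dots> = of_real (\<Sum>i\<in>UNIV. (norm (W$i))^2)" by simp
  also have "(\<Sum>i\<in>UNIV. (norm (W$i))^2) = (norm W)^2"
    unfolding norm_vec_def L2_set_def by (simp add: sum_nonneg)
  finally show ?thesis .
qed

lemma norm_le_sum_cart: "norm (x::'a::real_normed_vector^'n::finite) \<le> (\<Sum>i\<in>UNIV. norm (x$i))"
  by (simp add: norm_vec_def L2_set_le_sum)

lemma entry_bound:
  fixes G :: "'n::finite cmat"
  assumes "\<And>v. norm (G *v v) \<le> c * norm v"
  shows "cmod (G$i$j) \<le> c"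
proof -
  have "G$i$j = (G *v axis j 1)$i"
    unfolding axis_def matrix_vector_mult_def by (simp add: if_distrib[of "\<lambda>x. G$i$_ * x"] cong: if_cong)
  then have "cmod (G$i$j) \<le> norm (G *v axis j 1)" using Finite_Cartesian_Product.norm_nth_le by metis
  also have "\<dots> \<le> c * norm (axis j (1::complex))" by (rule assms)
  also have "norm (axis j (1::complex)) = 1" by (simp add: norm_Basis Basis_complex_def)
  finally show ?thesis by simp
qed

lemma matrix_norm_bound:
  fixes G :: "'n::finite cmat"
  assumes "\<And>i j. cmod (G$i$j) \<le> c"
  shows "norm G \<le> of_nat CARD('n) * (of_nat CARD('n) * c)"
proof -
  have "norm G \<le> (\<Sum>i\<in>UNIV. norm (G$i))" by (rule norm_le_sum_cart)
  also have "\<dots> \<le> (\<Sum>i\<in>(UNIV::'n set). \<Sum>j\<in>(UNIV::'n set). c)"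
    by (rule sum_mono, rule order_trans[OF norm_le_sum_cart], rule sum_mono) (simp add: assms)
  finally show ?thesis by simp
qed

lemma tendsto_entry: "(A \<longlongrightarrow> a) F \<Longrightarrow> ((\<lambda>x. A x $ i $ j) \<longlongrightarrow> a $ i $ j) F"
  by (intro tendsto_vec_nth)

lemma tendsto_mmult:
  fixes A :: "'x \<Rightarrow> complex^'n::finite^'m" and B :: "'x \<Rightarrow> complex^'k^'n"
  assumes "(A \<longlongrightarrow> a) F" "(B \<longlongrightarrow> b) F"
  shows "((\<lambda>x. A x ** B x) \<longlongrightarrow> a ** b) F"
proof (rule vec_tendstoI, rule vec_tendstoI)
  fix i j
  show "((\<lambda>x. (A x ** B x) $ i $ j) \<longlongrightarrow> (a ** b) $ i $ j) F"
    unfolding matrix_matrix_mult_def using assms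
    by (simp add: tendsto_sum tendsto_mult tendsto_entry)
qed

lemma tendsto_adj:
  assumes "(A \<longlongrightarrow> a) F"
  shows "((\<lambda>x. adj (A x)) \<longlongrightarrow> adj a) F"
proof (rule vec_tendstoI, rule vec_tendstoI)
  fix i j
  show "((\<lambda>x. adj (A x) $ i $ j) \<longlongrightarrow> adj a $ i $ j) F"
    unfolding adj_def using assms by (simp add: tendsto_cnj tendsto_entry)
qed

lemma tendsto_kron1:
  assumes "(A \<longlongrightarrow> a) F"
  shows "((\<lambda>x. kron (A x) B) \<longlongrightarrow> kron a B) F"
proof (rule vec_tendstoI, rule vec_tendstoI)
  fix i j
  show "((\<lambda>x. kron (A x) B $ i $ j) \<longlongrightarrow> kron a B $ i $ j) F"
    unfolding kron_def using assms by (simp add: tendsto_mult tendsto_entry)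
qed

lemma tendsto_ctid:
  assumes "(V \<longlongrightarrow> v) F" "(G \<longlongrightarrow> g) F"
  shows "((\<lambda>x. conj_tensor_id (V x) (G x)) \<longlongrightarrow> conj_tensor_id v g) F"
  unfolding conj_tensor_id_def
  by (intro tendsto_mmult tendsto_adj tendsto_kron1 assms)

lemma tendsto_qf:
  assumes "(G \<longlongrightarrow> g) F"
  shows "((\<lambda>x. qf (G x) v) \<longlongrightarrow> qf g v) F"
  unfolding qf_sum using assms by (intro tendsto_sum tendsto_mult tendsto_const tendsto_entry)

lemma tendsto_tr:
  assumes "(A \<longlongrightarrow> a) F"
  shows "((\<lambda>x. tr (A x)) \<longlongrightarrow> tr a) F"
  unfolding tr_def using assms by (intro tendsto_sum tendsto_entry)

lemma tr_mat1: "tr (mat 1 :: 'n::finite cmat) = of_nat CARD('n)"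
  by (simp add: tr_def mat_def)

lemma tr_add: "tr (A + B) = tr A + tr B"
  by (simp add: tr_def sum.distrib)

lemma tr_scaleR: "tr (c *\<^sub>R A) = of_real c * tr A"
  apply (simp add: tr_def)
  apply (simp add: sum_distrib_left scaleR_conv_of_real)
  done

lemma kron_gram: "kron (V ** adj V) (mat 1 :: 'b::finite cmat) = kron V (mat 1 :: 'b cmat) ** adj (kron V (mat 1 :: 'b cmat))"
  by (simp add: adj_kron kron_mult)

lemma step_construct:
  fixes \<rho> :: "('a::finite \<times> 'b::finite) cmat" and \<sigma> :: "'a cmat"
  assumes psd\<rho>: "psd \<rho>" and st: "is_state \<sigma>" and t: "t \<ge> 0"
    and le: "loewner_le \<rho> (t *\<^sub>R kron \<sigma> (mat 1 :: 'b cmat))" and e: "\<epsilon> > 0"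
  shows "\<exists>(W :: 'a cmat) (G :: ('a \<times> 'b) cmat). psd G \<and> \<rho> = conj_tensor_id W G \<and>
           (\<forall>v. Re (qf G v) \<le> t * (norm v)^2) \<and> (norm W)^2 = 1 + \<epsilon> * of_nat CARD('a)"
proof -
  define P where "P = \<sigma> + \<epsilon> *\<^sub>R (mat 1 :: 'a cmat)"
  have psd\<sigma>: "psd \<sigma>" and tr\<sigma>: "tr \<sigma> = 1" using st unfolding is_state_def by auto
  have hP: "adj P = P"
    unfolding P_def by (simp add: adj_add adj_scaleR psd_hermitian[OF psd\<sigma>])
  have pdP: "\<forall>v. v \<noteq> 0 \<longrightarrow> Re (qf P v) > 0"
  proof (intro allI impI)
    fix v :: "complex^'a" assume "v \<noteq> 0"
    then have "\<epsilon> * (norm v)^2 > 0" using e by simp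
    moreover have "Re (qf \<sigma> v) \<ge> 0" using psd\<sigma> unfolding psd_qf by blast
    ultimately show "Re (qf P v) > 0" unfolding P_def by (simp add: qf_add qf_scaleR qf_id)
  qed
  obtain W Wi where W: "W ** adj W = P" "W ** Wi = mat 1" "Wi ** W = mat 1"
    using factor_pd[OF hP pdP] by blast
  define K where "K = kron Wi (mat 1 :: 'b cmat)"
  define G where "G = K ** \<rho> ** adj K"
  have psdG: "psd G"
    unfolding G_def by (rule psd_congr[OF psd\<rho>])
  have KW1: "kron W (mat 1 :: 'b cmat) ** K = mat 1"
    unfolding K_def by (simp add: kron_mult W kron_one)
  have KW2: "adj K ** adj (kron W (mat 1 :: 'b cmat)) = mat 1"
    using arg_cong[OF KW1, of adj] by (simp add: adj_mult)
  have rep: "\<rho> = conj_tensor_id W G"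
  proof -
    have "conj_tensor_id W G = (kron W (mat 1 :: 'b cmat) ** K) ** \<rho> ** (adj K ** adj (kron W (mat 1 :: 'b cmat)))"
      unfolding conj_tensor_id_def G_def by (simp add: matrix_mul_assoc)
    then show ?thesis by (simp add: KW1 KW2)
  qed
  have WW: "Wi ** (W ** adj W) ** adj Wi = mat 1"
  proof -
    have "adj W ** adj Wi = mat 1" using arg_cong[OF W(3), of adj] by (simp add: adj_mult)
    have "Wi ** (W ** adj W) ** adj Wi = (Wi ** W) ** (adj W ** adj Wi)" by (simp only: matrix_mul_assoc)
    also have "\<dots> = mat 1" using W(3) \<open>adj W ** adj Wi = mat 1\<close> by simp
    finally show ?thesis .
  qed
  have KPK: "K ** kron P (mat 1 :: 'b cmat) ** adj K = mat 1"
    unfolding K_def W(1)[symmetric] by (simp add: adj_kron kron_mult WW kron_one)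
  have bound: "Re (qf G v) \<le> t * (norm v)^2" for v
  proof -
    define u where "u = adj K *v v"
    have qG: "qf G v = qf \<rho> u" unfolding G_def u_def by (rule qf_congr)
    have "Re (qf (t *\<^sub>R kron \<sigma> (mat 1 :: 'b cmat) - \<rho>) u) \<ge> 0"
      using le unfolding loewner_le_def psd_qf by blast
    then have r1: "Re (qf \<rho> u) \<le> t * Re (qf (kron \<sigma> (mat 1 :: 'b cmat)) u)"
      by (simp add: qf_diff qf_scaleR)
    have "kron P (mat 1 :: 'b cmat) = kron \<sigma> (mat 1) + \<epsilon> *\<^sub>R mat 1"
      unfolding P_def by (simp add: kron_add kron_scaleR kron_one)
    then have "qf (kron P (mat 1 :: 'b cmat)) u = qf (kron \<sigma> (mat 1 :: 'b cmat)) u + of_real \<epsilon> * of_real ((norm u)^2)"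
      by (simp add: qf_add qf_scaleR qf_id)
    then have r2: "Re (qf (kron \<sigma> (mat 1 :: 'b cmat)) u) \<le> Re (qf (kron P (mat 1 :: 'b cmat)) u)"
      using e by simp
    have "qf (kron P (mat 1 :: 'b cmat)) u = qf (K ** kron P (mat 1 :: 'b cmat) ** adj K) v"
      unfolding u_def by (rule qf_congr[symmetric])
    then have r3: "Re (qf (kron P (mat 1 :: 'b cmat)) u) = (norm v)^2"
      by (simp add: KPK qf_id)
    show ?thesis unfolding qG using r1 r2 r3 t by (smt (verit) mult_left_mono)
  qed
  have "tr (W ** adj W) = 1 + of_real \<epsilon> * of_nat CARD('a)"
    unfolding W(1) P_def by (simp add: tr_add tr_scaleR tr_mat1 tr\<sigma>)
  then have "of_real ((norm W)^2) = (of_real (1 + \<epsilon> * of_nat CARD('a)) :: complex)"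
    by (simp add: tr_gram)
  then have nW: "(norm W)^2 = 1 + \<epsilon> * of_nat CARD('a)" using of_real_eq_iff by blast
  show ?thesis using psdG rep bound nW by blast
qed

theorem lemma1:
  fixes \<rho> :: "('a::finite \<times> 'b::finite) cmat"
  assumes "psd \<rho>"
  shows "\<exists>(V :: 'a cmat) (G :: ('a \<times> 'b) cmat).
           tr (V ** adj V) = 1 \<and> psd G \<and>
           \<rho> = conj_tensor_id V G \<and> op_norm G = cond_diamond_norm \<rho>"
proof -
  define S where "S = {t::real. t > 0 \<and>
      (\<exists>\<sigma> :: 'a cmat. is_state \<sigma> \<and> loewner_le \<rho> (t *\<^sub>R kron \<sigma> (mat 1 :: 'b cmat)))}"
  have cdn: "cond_diamond_norm \<rho> = Inf S" unfolding cond_diamond_norm_def S_def ..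
  define d where "d = real CARD('a)"
  have d_pos: "d > 0" unfolding d_def by simp
  have S_ne: "S \<noteq> {}"
  proof -
    define \<sigma>0 :: "'a cmat" where "\<sigma>0 = (1 / d) *\<^sub>R mat 1"
    define t0 where "t0 = d * (op_norm \<rho> + 1)"
    have "is_state \<sigma>0"
      unfolding is_state_def psd_qf \<sigma>0_def using d_pos
      by (simp add: qf_scaleR qf_id tr_scaleR tr_mat1 d_def)
    moreover have "loewner_le \<rho> (t0 *\<^sub>R kron \<sigma>0 (mat 1 :: 'b cmat))"
    proof -
      have "t0 *\<^sub>R kron \<sigma>0 (mat 1 :: 'b cmat) = (op_norm \<rho> + 1) *\<^sub>R mat 1"
        unfolding t0_def \<sigma>0_def using d_pos by (simp add: kron_scaleR kron_one)
      moreover have "Im (qf \<rho> v) = 0" for v using assms unfolding psd_qf by blast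
      moreover have "Re (qf \<rho> v) \<le> (op_norm \<rho> + 1) * (norm v)^2" for v
        using qf_le_op_norm[of \<rho> v] by (smt (verit) mult_right_mono zero_le_power2)
      ultimately show ?thesis unfolding loewner_le_def psd_qf
        by (simp add: qf_diff qf_scaleR qf_id)
    qed
    moreover have "t0 > 0" unfolding t0_def using d_pos op_norm_nonneg[of \<rho>]
      by (simp add: add_nonneg_pos)
    ultimately have "t0 \<in> S" unfolding S_def by blast
    then show ?thesis by blast
  qed
  have S_lb: "\<And>t. t \<in> S \<Longrightarrow> 0 \<le> t" unfolding S_def by auto
  have bddS: "bdd_below S" using S_lb by (meson bdd_below.I)
  define lam where "lam = Inf S"
  have lam_nn: "lam \<ge> 0" unfolding lam_def using S_ne S_lb by (meson cInf_greatest)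
  have lam_le: "\<And>t. t \<in> S \<Longrightarrow> lam \<le> t" unfolding lam_def using bddS by (simp add: cInf_lower)
  define e where "e n = inverse (real (Suc n))" for n
  have e_pos: "e n > 0" for n unfolding e_def by simp
  have e_le1: "e n \<le> 1" for n unfolding e_def by (simp add: inverse_le_1_iff)
  have seq: "\<exists>W G t. lam \<le> t \<and> t < lam + e n \<and> psd G \<and> \<rho> = conj_tensor_id W G \<and>
       (\<forall>v. Re (qf G v) \<le> t * (norm v)^2) \<and> (norm W)^2 = 1 + e n * d" for n
  proof -
    have "Inf S < lam + e n" using e_pos unfolding lam_def by simp
    then obtain t where tS: "t \<in> S" and tl: "t < lam + e n" using cInf_less_iff[OF S_ne bddS] by blast
    then obtain \<sigma> :: "'a cmat" where st: "is_state \<sigma>" and le: "loewner_le \<rho> (t *\<^sub>R kron \<sigma> (mat 1 :: 'b cmat))"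
      and tpos: "t > 0" unfolding S_def by blast
    obtain W G where WG: "psd G" "\<rho> = conj_tensor_id W G" "\<forall>v. Re (qf G v) \<le> t * (norm v)^2"
      "(norm W)^2 = 1 + e n * of_nat CARD('a)"
      using step_construct[OF assms st _ le e_pos[of n]] tpos by auto
    show ?thesis using WG tl lam_le[OF tS] unfolding d_def by blast
  qed
  then obtain Wf Gf tf where F: "\<And>n. lam \<le> tf n \<and> tf n < lam + e n \<and> psd (Gf n) \<and> \<rho> = conj_tensor_id (Wf n) (Gf n) \<and>
       (\<forall>v. Re (qf (Gf n) v) \<le> tf n * (norm v)^2) \<and> (norm (Wf n))^2 = 1 + e n * d"
    by metis
  define D where "D = real CARD('a \<times> 'b)"
  have Gb: "norm (Gf n) \<le> D * (D * (lam + 1))" for n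
  proof -
    have tn: "0 \<le> tf n" "tf n \<le> lam + 1" using F[of n] lam_nn e_le1[of n] by auto
    have "norm (Gf n *v v) \<le> tf n * norm v" for v
      by (rule psd_norm_bound) (use F[of n] tn in auto)
    then have "cmod (Gf n $ i $ j) \<le> tf n" for i j by (rule entry_bound)
    then have "cmod (Gf n $ i $ j) \<le> lam + 1" for i j using tn by (meson order_trans)
    then show ?thesis unfolding D_def by (rule matrix_norm_bound)
  qed
  have Wb: "norm (Wf n) \<le> 2 + d" for n
  proof -
    have "(norm (Wf n))^2 \<le> 1 + d" using F[of n] e_le1[of n] d_pos
      by (simp add: mult_left_le_one_le)
    moreover have "0 \<le> (norm (Wf n))^2 + 1 - 2 * norm (Wf n)"
      using power2_diff[of "norm (Wf n)" 1] zero_le_power2[of "norm (Wf n) - 1"] by simp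
    then have "norm (Wf n) \<le> 1 + (norm (Wf n))^2" using zero_le_power2[of "norm (Wf n)"] by linarith
    ultimately show ?thesis by simp
  qed
  define f where "f n = (Wf n, Gf n)" for n
  have "bounded (range f)"
    unfolding bounded_iff
  proof (intro exI ballI)
    fix x assume "x \<in> range f"
    then obtain n where "x = f n" by blast
    then show "norm x \<le> (2 + d) + D * (D * (lam + 1))"
      unfolding f_def using norm_Pair_le[of "Wf n" "Gf n"] Wb[of n] Gb[of n] by simp
  qed
  then obtain l r where r: "strict_mono (r :: nat \<Rightarrow> nat)" and lim: "(f \<circ> r) \<longlonglongrightarrow> l"
    using bounded_imp_convergent_subsequence by blast
  define V where "V = fst l"
  define G where "G = snd l"
  have limW: "(\<lambda>n. Wf (r n)) \<longlonglongrightarrow> V"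
    using tendsto_fst[OF lim] unfolding V_def f_def comp_def by simp
  have limG: "(\<lambda>n. Gf (r n)) \<longlonglongrightarrow> G"
    using tendsto_snd[OF lim] unfolding G_def f_def comp_def by simp
  have lime: "e \<longlonglongrightarrow> 0" unfolding e_def by (rule LIMSEQ_inverse_real_of_nat)
  have limt0: "tf \<longlonglongrightarrow> lam"
  proof (rule tendsto_sandwich[of "\<lambda>n. lam" _ _ "\<lambda>n. lam + e n"])
    show "\<forall>\<^sub>F n in sequentially. lam \<le> tf n" using F by simp
    show "\<forall>\<^sub>F n in sequentially. tf n \<le> lam + e n" using F by (simp add: less_imp_le)
    show "(\<lambda>n. lam) \<longlonglongrightarrow> lam" by simp
    show "(\<lambda>n. lam + e n) \<longlonglongrightarrow> lam" using tendsto_add[OF tendsto_const lime, of lam] by simp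
  qed
  have limt: "(\<lambda>n. tf (r n)) \<longlonglongrightarrow> lam"
    using LIMSEQ_subseq_LIMSEQ[OF limt0 r] unfolding comp_def .
  have lime2: "(\<lambda>n. e (r n)) \<longlonglongrightarrow> 0"
    using LIMSEQ_subseq_LIMSEQ[OF lime r] unfolding comp_def .
  have rep: "\<rho> = conj_tensor_id V G"
  proof -
    have "(\<lambda>n. conj_tensor_id (Wf (r n)) (Gf (r n))) \<longlonglongrightarrow> conj_tensor_id V G"
      by (rule tendsto_ctid[OF limW limG])
    moreover have "(\<lambda>n. conj_tensor_id (Wf (r n)) (Gf (r n))) = (\<lambda>n. \<rho>)" using F by metis
    ultimately show ?thesis using LIMSEQ_unique tendsto_const by metis
  qed
  have qlim: "(\<lambda>n. qf (Gf (r n)) v) \<longlonglongrightarrow> qf G v" for v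
    by (rule tendsto_qf[OF limG])
  have psdG: "psd G"
    unfolding psd_qf
  proof (intro allI conjI)
    fix v
    have "(\<lambda>n. Im (qf (Gf (r n)) v)) \<longlonglongrightarrow> Im (qf G v)" by (rule tendsto_Im[OF qlim])
    moreover have "(\<lambda>n. Im (qf (Gf (r n)) v)) = (\<lambda>n. 0)" using F unfolding psd_qf by metis
    ultimately show "Im (qf G v) = 0" using LIMSEQ_unique tendsto_const by metis
    have "(\<lambda>n. Re (qf (Gf (r n)) v)) \<longlonglongrightarrow> Re (qf G v)" by (rule tendsto_Re[OF qlim])
    moreover have "\<forall>n. 0 \<le> Re (qf (Gf (r n)) v)" using F unfolding psd_qf by metis
    ultimately show "0 \<le> Re (qf G v)" by (meson LIMSEQ_le_const)
  qed
  have Gbd: "Re (qf G v) \<le> lam * (norm v)^2" for v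
  proof -
    have "(\<lambda>n. Re (qf (Gf (r n)) v)) \<longlonglongrightarrow> Re (qf G v)" by (rule tendsto_Re[OF qlim])
    moreover have "(\<lambda>n. tf (r n) * (norm v)^2) \<longlonglongrightarrow> lam * (norm v)^2"
      by (rule tendsto_mult[OF limt tendsto_const])
    moreover have "\<forall>n. Re (qf (Gf (r n)) v) \<le> tf (r n) * (norm v)^2" using F by blast
    ultimately show ?thesis by (meson LIMSEQ_le)
  qed
  have trV: "tr (V ** adj V) = 1"
  proof -
    have "(\<lambda>n. tr (Wf (r n) ** adj (Wf (r n)))) \<longlonglongrightarrow> tr (V ** adj V)"
      by (intro tendsto_tr tendsto_mmult tendsto_adj limW)
    moreover have "(\<lambda>n. tr (Wf (r n) ** adj (Wf (r n)))) = (\<lambda>n. of_real (1 + e (r n) * d))"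
      using F by (simp add: tr_gram)
    moreover have "(\<lambda>n. (of_real (1 + e (r n) * d) :: complex)) \<longlonglongrightarrow> of_real (1 + 0 * d)"
      by (intro tendsto_of_real tendsto_add tendsto_mult tendsto_const lime2)
    ultimately show ?thesis using LIMSEQ_unique by fastforce
  qed
  have up: "op_norm G \<le> lam"
    by (rule op_norm_le[OF lam_nn], rule psd_norm_bound[OF psdG lam_nn Gbd])
  have inS: "t \<in> S" if t: "t > op_norm G" for t
  proof -
    have tpos: "t > 0" using t op_norm_nonneg[of G] by linarith
    define K where "K = kron V (mat 1 :: 'b cmat)"
    have st: "is_state (V ** adj V)"
      unfolding is_state_def psd_qf using trV by (simp add: qf_gram)
    have "loewner_le \<rho> (t *\<^sub>R kron (V ** adj V) (mat 1 :: 'b cmat))"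
      unfolding loewner_le_def psd_qf
    proof (intro allI conjI)
      fix v
      define u where "u = adj K *v v"
      have e1: "qf (t *\<^sub>R kron (V ** adj V) (mat 1 :: 'b cmat) - \<rho>) v = of_real t * of_real ((norm u)^2) - qf G u"
        unfolding rep conj_tensor_id_def kron_gram K_def[symmetric] u_def
        by (simp add: qf_diff qf_scaleR qf_gram qf_congr)
      have "Im (qf G u) = 0" "Re (qf G u) \<le> op_norm G * (norm u)^2"
        using psdG qf_le_op_norm[of G u] unfolding psd_qf by auto
      moreover have "op_norm G * (norm u)^2 \<le> t * (norm u)^2" using t by (simp add: mult_right_mono)
      ultimately show "Im (qf (t *\<^sub>R kron (V ** adj V) (mat 1 :: 'b cmat) - \<rho>) v) = 0"
        "0 \<le> Re (qf (t *\<^sub>R kron (V ** adj V) (mat 1 :: 'b cmat) - \<rho>) v)"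
        unfolding e1 by simp_all
    qed
    then show ?thesis unfolding S_def using tpos st by blast
  qed
  have low: "lam \<le> op_norm G"
  proof (rule ccontr)
    assume "\<not> lam \<le> op_norm G"
    then have "(op_norm G + lam) / 2 > op_norm G" by simp
    then have "(op_norm G + lam) / 2 \<in> S" by (rule inS)
    then have "lam \<le> (op_norm G + lam) / 2" by (rule lam_le)
    then show False using \<open>\<not> lam \<le> op_norm G\<close> by simp
  qed
  have "op_norm G = cond_diamond_norm \<rho>" using up low cdn lam_def by simp
  then show ?thesis using trV psdG rep by blast
qed

end
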